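(* Let $C_{TS}>0$ be a fixed absolute constant and, for a problem instance, let $N_{TS}=C_{TS}\,\varepsilon_{TS}^{-2}\log(\delta_{TS}^{-1})$ where $\varepsilon_{TS}=\min_{i,j\in[K]}\mathbb E[(\mu_i-\mu_j)_+]$ and $\delta_{TS}=\min_{i\in[K]}\Pr[A^*=i]$. Fix $M\geq 1$. Suppose each prior $\mathcal P_i$, $i\in[K]$, is a $\mathrm{Beta}(\alpha_i,\beta_i)$ distribution with $\alpha_i,\beta_i\in[1,M]$. Then $N_{TS}=O_M(\log K)$, i.e. $N_{TS}\leq c_M\log K$ for $K\geq 2$, where $c_M$ depends only on $M$ (and $C_{TS}$).
   Context: A problem instance consists of $K$ arms with mean rewards $\mu_1,\dots,\mu_K\in[0,1]$ drawn independently, $\mu_i\sim\mathcal P_i$. $A^*=\min(\arg\max_j\mu_j)$. $(x)_+=\max(x,0)$. *)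

theory Defs
  imports "HOL-Probability.Probability"
begin

text \<open>Density of the Beta(a,b) distribution on [0,1] (set to 0 at the two
endpoints, a Lebesgue-null set, to avoid the convention 0 powr 0 = 0).\<close>
definition beta_pdf :: "real \<Rightarrow> real \<Rightarrow> real \<Rightarrow> real" where
  "beta_pdf a b x =
     (if 0 < x \<and> x < 1 then x powr (a - 1) * (1 - x) powr (b - 1) / Beta a b else 0)"

definition beta_measure :: "real \<Rightarrow> real \<Rightarrow> real measure" where
  "beta_measure a b = density lborel (\<lambda>x. ennreal (beta_pdf a b x))"

definition instance_measure :: "nat \<Rightarrow> (nat \<Rightarrow> real) \<Rightarrow> (nat \<Rightarrow> real) \<Rightarrow> (nat \<Rightarrow> real) measure" where
  "instance_measure K \<alpha> \<beta> = PiM {..<K} (\<lambda>i. beta_measure (\<alpha> i) (\<beta> i))"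

definition best_arm :: "nat \<Rightarrow> (nat \<Rightarrow> real) \<Rightarrow> nat" where
  "best_arm K \<mu> = Min {i \<in> {..<K}. \<forall>j<K. \<mu> j \<le> \<mu> i}"

definition pos_part :: "real \<Rightarrow> real" where
  "pos_part x = max x 0"

definition eps_TS :: "nat \<Rightarrow> (nat \<Rightarrow> real) measure \<Rightarrow> real" where
  "eps_TS K P = Min {(\<integral>\<mu>. pos_part (\<mu> i - \<mu> j) \<partial>P) | i j. i < K \<and> j < K \<and> i \<noteq> j}"

definition delta_TS :: "nat \<Rightarrow> (nat \<Rightarrow> real) measure \<Rightarrow> real" where
  "delta_TS K P = Min {measure P {\<mu> \<in> space P. best_arm K \<mu> = i} | i. i < K}"

definition N_TS :: "real \<Rightarrow> nat \<Rightarrow> (nat \<Rightarrow> real) measure \<Rightarrow> real" where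
  "N_TS C K P = C * (eps_TS K P) powr (-2) * ln (1 / delta_TS K P)"

end

theory Submission
  imports Defs
begin

lemma Beta_11: "Beta 1 1 = (1::real)"
  by (simp add: Beta_def Gamma_plus1[of 1, simplified])

lemma Beta_bounds:
  fixes a b M :: real
  assumes "1 \<le> a" "a \<le> M" "1 \<le> b" "b \<le> M"
  shows "0 < Beta M M" "Beta M M \<le> Beta a b" "Beta a b \<le> 1" "0 < Beta a b"
proof -
  show "0 < Beta M M" using assms by (simp add: Beta_def Gamma_real_pos)
  show "0 < Beta a b" using assms by (simp add: Beta_def Gamma_real_pos)
  show "Beta M M \<le> Beta a b" using assms by (intro Beta_real_mono) auto
  show "Beta a b \<le> 1" using Beta_real_mono[of 1 a 1 b] assms by (simp add: Beta_11)
qed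

lemma beta_pdf_borel[measurable]: "beta_pdf a b \<in> borel_measurable borel"
  unfolding beta_pdf_def by measurable

lemma beta_pdf_nonneg: "a > 0 \<Longrightarrow> b > 0 \<Longrightarrow> 0 \<le> beta_pdf a b x"
  unfolding beta_pdf_def by (simp add: Beta_def Gamma_real_pos)

lemma prob_space_beta:
  fixes a b :: real
  assumes "0 < a" "0 < b"
  shows "prob_space (beta_measure a b)"
proof (rule prob_spaceI)
  have B: "0 < Beta a b" using assms by (simp add: Beta_def Gamma_real_pos)
  let ?f = "\<lambda>t. t powr (a - 1) * (1 - t) powr (b - 1) / Beta a b"
  have hi: "(?f has_integral 1) {0<..<1}"
    using has_integral_divide[OF has_integral_Beta_real[OF assms], of "Beta a b"] B
    by (simp add: has_integral_Icc_iff_Ioo)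
  have "integral\<^sup>N lborel (\<lambda>x. indicator {0<..<1::real} x * ?f x) = 1"
    using nn_integral_has_integral_lebesgue[OF _ hi] B by simp
  moreover have "(\<lambda>x. ennreal (beta_pdf a b x)) = (\<lambda>x. ennreal (indicator {0<..<1::real} x * ?f x))"
    by (auto simp: beta_pdf_def indicator_def fun_eq_iff)
  ultimately have "(\<integral>\<^sup>+x. ennreal (beta_pdf a b x) \<partial>lborel) = 1" by simp
  then show "emeasure (beta_measure a b) (space (beta_measure a b)) = 1"
    unfolding beta_measure_def
    by (subst emeasure_density) (auto)
qed


lemma pdf_upper:
  fixes a b M :: real
  assumes "1 \<le> a" "a \<le> M" "1 \<le> b" "b \<le> M"
  shows "beta_pdf a b x \<le> 1 / Beta M M"
proof (cases "0 < x \<and> x < 1")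
  case True
  note B = Beta_bounds[OF assms]
  have 1: "x powr (a - 1) \<le> 1" using powr_mono'[of 0 "a-1" x] True assms by simp
  have 2: "(1-x) powr (b - 1) \<le> 1" using powr_mono'[of 0 "b-1" "1-x"] True assms by simp
  have "x powr (a - 1) * (1 - x) powr (b - 1) \<le> 1"
    using mult_mono[OF 1 2] by simp
  then have "x powr (a - 1) * (1 - x) powr (b - 1) / Beta a b \<le> 1 / Beta a b"
    using B by (simp add: divide_right_mono)
  also have "\<dots> \<le> 1 / Beta M M" using B by (simp add: frac_le)
  finally show ?thesis using True by (simp add: beta_pdf_def)
next
  case False
  then show ?thesis using Beta_bounds[OF assms] by (auto simp: beta_pdf_def)
qed

lemma pdf_lower:
  fixes a b M :: real
  assumes "1 \<le> a" "a \<le> M" "1 \<le> b" "b \<le> M" "0 < x" "x < 1"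
  shows "x powr (M - 1) * (1 - x) powr (M - 1) \<le> beta_pdf a b x"
proof -
  note B = Beta_bounds[OF assms(1-4)]
  have 1: "x powr (M - 1) \<le> x powr (a - 1)" using powr_mono'[of "a-1" "M-1" x] assms by simp
  have 2: "(1-x) powr (M - 1) \<le> (1-x) powr (b - 1)" using powr_mono'[of "b-1" "M-1" "1-x"] assms by simp
  have "x powr (M - 1) * (1 - x) powr (M - 1) \<le> x powr (a - 1) * (1 - x) powr (b - 1)"
    by (rule mult_mono[OF 1 2]) auto
  also have "\<dots> \<le> x powr (a - 1) * (1 - x) powr (b - 1) / Beta a b"
  proof -
    have nn: "0 \<le> x powr (a - 1) * (1 - x) powr (b - 1)" by simp
    have "x powr (a - 1) * (1 - x) powr (b - 1) * Beta a b \<le> x powr (a - 1) * (1 - x) powr (b - 1)"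
      using mult_left_le[OF B(3) nn] .
    then show ?thesis using B by (simp add: le_divide_eq)
  qed
  finally show ?thesis using assms by (simp add: beta_pdf_def)
qed

lemma beta_prob_lower:
  fixes a b u v c :: real
  assumes "0 < a" "0 < b" "u \<le> v" "0 \<le> c" "\<And>x. x \<in> {u..v} \<Longrightarrow> c \<le> beta_pdf a b x"
  shows "c * (v - u) \<le> measure (beta_measure a b) {u..v}"
proof -
  interpret prob_space "beta_measure a b" by (rule prob_space_beta) (use assms in auto)
  have "(\<integral>\<^sup>+x. ennreal c * indicator {u..v} x \<partial>lborel) = ennreal c * emeasure lborel {u..v}"
    by (rule nn_integral_cmult_indicator) simp
  then have "ennreal (c * (v - u)) = (\<integral>\<^sup>+x. ennreal c * indicator {u..v} x \<partial>lborel)"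
    using assms by (simp add: ennreal_mult')
  also have "\<dots> \<le> (\<integral>\<^sup>+x. ennreal (beta_pdf a b x) * indicator {u..v} x \<partial>lborel)"
  proof (intro nn_integral_mono)
    fix x show "ennreal c * indicator {u..v} x \<le> ennreal (beta_pdf a b x) * indicator {u..v} x"
    proof (cases "x \<in> {u..v}")
      case True
      then have "c \<le> beta_pdf a b x" using assms(5) by blast
      then have "ennreal c \<le> ennreal (beta_pdf a b x)" by (rule ennreal_leI)
      then show ?thesis using True by (simp add: indicator_def)
    next
      case False then show ?thesis by simp
    qed
  qed
  also have "\<dots> = emeasure (beta_measure a b) {u..v}"
    unfolding beta_measure_def by (subst emeasure_density) auto
  also have "\<dots> = ennreal (measure (beta_measure a b) {u..v})"
    by (simp add: emeasure_eq_measure)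
  finally have "ennreal (c * (v - u)) \<le> ennreal (measure (beta_measure a b) {u..v})" .
  then show ?thesis using ennreal_le_iff[OF measure_nonneg] by blast
qed

lemma beta_prob_upper:
  fixes a b w L :: real
  assumes "0 < a" "0 < b" "w \<le> 1" "0 \<le> L" "\<And>x. beta_pdf a b x \<le> L"
  shows "measure (beta_measure a b) {w..} \<le> L * (1 - w)"
proof -
  interpret prob_space "beta_measure a b" by (rule prob_space_beta) (use assms in auto)
  have "ennreal (measure (beta_measure a b) {w..}) = emeasure (beta_measure a b) {w..}"
    by (simp add: emeasure_eq_measure)
  also have "\<dots> = (\<integral>\<^sup>+x. ennreal (beta_pdf a b x) * indicator {w..} x \<partial>lborel)"
    unfolding beta_measure_def by (subst emeasure_density) auto
  also have "\<dots> \<le> (\<integral>\<^sup>+x. ennreal L * indicator {w..1} x \<partial>lborel)"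
  proof (intro nn_integral_mono)
    fix x
    show "ennreal (beta_pdf a b x) * indicator {w..} x \<le> ennreal L * indicator {w..1} x"
    proof (cases "x \<le> 1")
      case True
      have "ennreal (beta_pdf a b x) \<le> ennreal L" using assms(5)[of x] by (rule ennreal_leI)
      then show ?thesis using True by (cases "w \<le> x") (simp_all add: indicator_def)
    next
      case False then show ?thesis by (auto simp: indicator_def beta_pdf_def)
    qed
  qed
  also have "(\<integral>\<^sup>+x. ennreal L * indicator {w..1} x \<partial>lborel) = ennreal L * emeasure lborel {w..1}"
    by (rule nn_integral_cmult_indicator) simp
  also have "\<dots> = ennreal (L * (1 - w))"
    using assms by (simp add: ennreal_mult)
  finally have "ennreal (measure (beta_measure a b) {w..}) \<le> ennreal (L * (1 - w))" .
  then show ?thesis using ennreal_le_iff[of "L * (1 - w)"] assms by simp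
qed


lemma fpps:
  assumes "\<And>i. 0 < a i \<and> 0 < b i" "finite I"
  shows "finite_product_prob_space (\<lambda>i. beta_measure (a i) (b i)) I"
  unfolding finite_product_prob_space_def finite_product_sigma_finite_def product_prob_space_def
    product_prob_space_axioms_def finite_product_sigma_finite_axioms_def product_sigma_finite_def
  using assms prob_space_beta prob_space_imp_sigma_finite by blast

lemma space_beta[simp]: "space (beta_measure a b) = UNIV"
  by (simp add: beta_measure_def)

lemma sets_beta[simp, measurable_cong]: "sets (beta_measure a b) = sets borel"
  by (simp add: beta_measure_def)

definition ext1 :: "nat \<Rightarrow> (nat \<Rightarrow> real) \<Rightarrow> nat \<Rightarrow> real" where
  "ext1 K a k = (if k < K then a k else 1)"

lemma inst_eq: "instance_measure K \<alpha> \<beta> = PiM {..<K} (\<lambda>k. beta_measure (ext1 K \<alpha> k) (ext1 K \<beta> k))"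
  unfolding instance_measure_def by (rule PiM_cong) (auto simp: ext1_def)

lemma ext1_pos: "(\<forall>i<K. 1 \<le> \<alpha> i) \<Longrightarrow> 0 < ext1 K \<alpha> k"
  unfolding ext1_def by (auto intro: less_le_trans[of 0 1])

lemma space_inst: "space (instance_measure K \<alpha> \<beta>) = PiE {..<K} (\<lambda>_. UNIV)"
  unfolding instance_measure_def by (simp add: space_PiM)


lemma prod_two:
  assumes "finite I" "i \<in> I" "j \<in> I" "i \<noteq> j" "\<And>k. k \<in> I \<Longrightarrow> k \<noteq> i \<Longrightarrow> k \<noteq> j \<Longrightarrow> f k = (1::real)"
  shows "prod f I = f i * f j"
proof -
  have "prod f I = f i * prod f (I - {i})" using assms by (simp add: prod.remove)
  also have "prod f (I - {i}) = f j * prod f (I - {i} - {j})" using assms by (intro prod.remove) auto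
  also have "prod f (I - {i} - {j}) = 1" using assms by (intro prod.neutral) auto
  finally show ?thesis by simp
qed

lemma eps_term:
  fixes Mx :: real
  assumes A: "\<forall>i<K. 1 \<le> \<alpha> i \<and> \<alpha> i \<le> Mx \<and> 1 \<le> \<beta> i \<and> \<beta> i \<le> Mx"
    and ij: "i < K" "j < K" "i \<noteq> j"
  shows "(\<integral>\<mu>. pos_part (\<mu> i - \<mu> j) \<partial>instance_measure K \<alpha> \<beta>) = 0 \<or>
         (1/4) * (((1/8::real) powr (Mx-1) * (1/8) powr (Mx-1) / 4) * ((1/8) powr (Mx-1) * (1/8) powr (Mx-1) / 4))
           \<le> (\<integral>\<mu>. pos_part (\<mu> i - \<mu> j) \<partial>instance_measure K \<alpha> \<beta>)"
proof -
  define q where "q = (1/8::real) powr (Mx-1) * (1/8) powr (Mx-1)"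
  define P where "P = instance_measure K \<alpha> \<beta>"
  define Mb where "Mb = (\<lambda>k. beta_measure (ext1 K \<alpha> k) (ext1 K \<beta> k))"
  have Mx1: "1 \<le> Mx" using A ij by force
  have apos: "\<And>k. 0 < ext1 K \<alpha> k" "\<And>k. 0 < ext1 K \<beta> k" using A ext1_pos by auto
  have fp: "finite_product_prob_space Mb {..<K}"
    unfolding Mb_def using apos by (intro fpps) auto
  have PMb: "P = PiM {..<K} Mb" unfolding P_def Mb_def by (rule inst_eq)
  have probP: "prob_space P" unfolding PMb Mb_def using apos by (intro prob_space_PiM prob_space_beta) auto
  define X where "X = (\<lambda>k. if k = i then {5/8..7/8::real} else if k = j then {1/8..3/8} else UNIV)"
  define E where "E = PiE {..<K} X"
  have Esets: "E \<in> sets P" unfolding E_def PMb Mb_def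
    by (intro sets_PiM_I_finite) (auto simp: X_def)
  have "measure P E = (\<Prod>k\<in>{..<K}. measure (Mb k) (X k))"
    unfolding PMb E_def using finite_product_prob_space.prob_times[OF fp, of X]
    by (auto simp: X_def Mb_def)
  also have "\<dots> = measure (Mb i) (X i) * measure (Mb j) (X j)"
  proof (rule prod_two)
    fix k assume "k \<in> {..<K}" "k \<noteq> i" "k \<noteq> j"
    then have "X k = space (Mb k)" by (simp add: X_def Mb_def)
    then show "measure (Mb k) (X k) = 1"
      using prob_space.prob_space[OF prob_space_beta[OF apos(1)[of k] apos(2)[of k]]]
      by (simp add: Mb_def)
  qed (use ij in auto)
  finally have mE: "measure P E = measure (Mb i) (X i) * measure (Mb j) (X j)" .
  have q_le: "q \<le> beta_pdf (ext1 K \<alpha> k) (ext1 K \<beta> k) x" if "k < K" "x \<in> {1/8..7/8}" for k x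
  proof -
    have ab: "1 \<le> ext1 K \<alpha> k" "ext1 K \<alpha> k \<le> Mx" "1 \<le> ext1 K \<beta> k" "ext1 K \<beta> k \<le> Mx"
      using A that by (auto simp: ext1_def)
    have 1: "(1/8) powr (Mx-1) \<le> x powr (Mx-1)" using that Mx1 by (intro powr_mono2) auto
    have 2: "(1/8) powr (Mx-1) \<le> (1-x) powr (Mx-1)" using that Mx1 by (intro powr_mono2) auto
    have "q \<le> x powr (Mx - 1) * (1 - x) powr (Mx - 1)"
      unfolding q_def by (rule mult_mono[OF 1 2]) auto
    also have "\<dots> \<le> beta_pdf (ext1 K \<alpha> k) (ext1 K \<beta> k) x"
      using that by (intro pdf_lower[OF ab]) auto
    finally show ?thesis .
  qed
  have q0: "0 \<le> q" unfolding q_def by simp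
  have mi: "q / 4 \<le> measure (Mb i) (X i)"
    using beta_prob_lower[OF apos(1)[of i] apos(2)[of i], of "5/8" "7/8" q] q_le[of i] ij q0
    by (simp add: X_def Mb_def)
  have mj: "q / 4 \<le> measure (Mb j) (X j)"
    using beta_prob_lower[OF apos(1)[of j] apos(2)[of j], of "1/8" "3/8" q] q_le[of j] ij q0
    by (simp add: X_def Mb_def)
  have mE2: "(q/4) * (q/4) \<le> measure P E"
    unfolding mE by (rule mult_mono[OF mi mj]) (use q0 in auto)
  show ?thesis
  proof (cases "integrable P (\<lambda>\<mu>. pos_part (\<mu> i - \<mu> j))")
    case False
    then show ?thesis unfolding P_def[symmetric] by (simp add: not_integrable_integral_eq)
  next
    case True
    have "(\<integral>\<mu>. (1/4) * indicator E \<mu> \<partial>P) \<le> (\<integral>\<mu>. pos_part (\<mu> i - \<mu> j) \<partial>P)"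
    proof (rule integral_mono'[OF True])
      fix \<mu> assume "\<mu> \<in> space P"
      show "0 \<le> pos_part (\<mu> i - \<mu> j)" by (simp add: pos_part_def)
      show "(1/4) * indicator E \<mu> \<le> pos_part (\<mu> i - \<mu> j)"
      proof (cases "\<mu> \<in> E")
        case True
        then have "\<mu> i \<in> X i" "\<mu> j \<in> X j" using ij unfolding E_def by auto
        then show ?thesis using True ij by (auto simp: X_def pos_part_def)
      qed (simp add: pos_part_def)
    qed
    moreover have "(\<integral>\<mu>. (1/4) * indicator E \<mu> \<partial>P) = (1/4) * measure P E"
      using Esets sets.sets_into_space[OF Esets] by (simp add: Int_absorb2)
    ultimately show ?thesis using mE2 unfolding P_def[symmetric] q_def[symmetric] by simp
  qed
qed


lemma best_arm_eq:
  assumes "i < K" "\<And>k. k < K \<Longrightarrow> k \<noteq> i \<Longrightarrow> \<mu> k < \<mu> i"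
  shows "best_arm K \<mu> = i"
proof -
  have "{k \<in> {..<K}. \<forall>j<K. \<mu> j \<le> \<mu> k} = {i}"
  proof (intro set_eqI iffI)
    fix k assume k: "k \<in> {k \<in> {..<K}. \<forall>j<K. \<mu> j \<le> \<mu> k}"
    show "k \<in> {i}"
    proof (rule ccontr)
      assume "k \<notin> {i}"
      then have "\<mu> k < \<mu> i" using assms k by auto
      moreover have "\<mu> i \<le> \<mu> k" using k assms by auto
      ultimately show False by simp
    qed
  next
    fix k assume "k \<in> {i}"
    then show "k \<in> {k \<in> {..<K}. \<forall>j<K. \<mu> j \<le> \<mu> k}"
      using assms by (auto simp: less_imp_le) (metis less_imp_le order_refl)
  qed
  then show ?thesis unfolding best_arm_def by simp
qed

lemma delta_term:
  fixes Mx :: real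
  assumes A: "\<forall>i<K. 1 \<le> \<alpha> i \<and> \<alpha> i \<le> Mx \<and> 1 \<le> \<beta> i \<and> \<beta> i \<le> Mx"
    and i: "i < K"
  shows "measure (instance_measure K \<alpha> \<beta>) {\<mu> \<in> space (instance_measure K \<alpha> \<beta>). best_arm K \<mu> = i} = 0 \<or>
         (1 / (8 * max 1 (1 / Beta Mx Mx) * real K)) powr Mx
           \<le> measure (instance_measure K \<alpha> \<beta>) {\<mu> \<in> space (instance_measure K \<alpha> \<beta>). best_arm K \<mu> = i}"
proof -
  define L where "L = max 1 (1 / Beta Mx Mx)"
  define P where "P = instance_measure K \<alpha> \<beta>"
  define Mb where "Mb = (\<lambda>k. beta_measure (ext1 K \<alpha> k) (ext1 K \<beta> k))"
  define t where "t = 1 / (2 * L * real K)"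
  define G where "G = {\<mu> \<in> space P. best_arm K \<mu> = i}"
  have Mx1: "1 \<le> Mx" using A i by force
  have L1: "1 \<le> L" unfolding L_def by simp
  have K1: "1 \<le> real K" using i by simp
  have t0: "0 < t" unfolding t_def using L1 K1 by simp
  have LK: "1 \<le> L * real K" using mult_mono[OF L1 K1] L1 by simp
  have t2: "t \<le> 1/2" unfolding t_def using frac_le[of 1 1 2 "2 * L * real K"] LK by simp
  have Lt: "L * t = 1 / (2 * real K)" unfolding t_def using L1 K1 by simp
  have apos: "\<And>k. 0 < ext1 K \<alpha> k" "\<And>k. 0 < ext1 K \<beta> k" using A ext1_pos by auto
  have ab: "1 \<le> ext1 K \<alpha> k" "ext1 K \<alpha> k \<le> Mx" "1 \<le> ext1 K \<beta> k" "ext1 K \<beta> k \<le> Mx" for k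
    using A Mx1 by (auto simp: ext1_def)
  have fp: "finite_product_prob_space Mb {..<K}"
    unfolding Mb_def using apos by (intro fpps) auto
  have PMb: "P = PiM {..<K} Mb" unfolding P_def Mb_def by (rule inst_eq)
  have probP: "prob_space P" unfolding PMb Mb_def using apos by (intro prob_space_PiM prob_space_beta) auto
  define Y where "Y = (\<lambda>k. if k = i then {1-t..} else {..<1-t::real})"
  define F where "F = PiE {..<K} Y"
  have Fsets: "F \<in> sets P" unfolding F_def PMb Mb_def
    by (intro sets_PiM_I_finite) (auto simp: Y_def)
  have FG: "F \<subseteq> G"
  proof
    fix \<mu> assume "\<mu> \<in> F"
    then have mu: "\<mu> \<in> PiE {..<K} Y" unfolding F_def .
    have "\<mu> \<in> space P" using mu unfolding P_def space_inst PiE_def by (simp add: Pi_def)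
    moreover have "best_arm K \<mu> = i"
    proof (rule best_arm_eq[OF i])
      fix k assume "k < K" "k \<noteq> i"
      have "\<mu> k \<in> Y k" using mu \<open>k < K\<close> by (simp add: PiE_mem)
      then have 1: "\<mu> k < 1 - t" using \<open>k \<noteq> i\<close> by (simp add: Y_def)
      have "\<mu> i \<in> Y i" using mu i by (simp add: PiE_mem)
      then have 2: "1 - t \<le> \<mu> i" by (simp add: Y_def)
      from 1 2 show "\<mu> k < \<mu> i" by simp
    qed
    ultimately show "\<mu> \<in> G" unfolding G_def by simp
  qed
  have "measure P F = (\<Prod>k\<in>{..<K}. measure (Mb k) (Y k))"
    unfolding PMb F_def using finite_product_prob_space.prob_times[OF fp, of Y]
    by (auto simp: Y_def Mb_def)
  also have "\<dots> = measure (Mb i) (Y i) * (\<Prod>k\<in>{..<K} - {i}. measure (Mb k) (Y k))"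
    using i by (simp add: prod.remove)
  finally have mF: "measure P F = measure (Mb i) (Y i) * (\<Prod>k\<in>{..<K} - {i}. measure (Mb k) (Y k))" .
  have pdfL: "beta_pdf (ext1 K \<alpha> k) (ext1 K \<beta> k) x \<le> L" for k x
    using pdf_upper[OF ab[of k], of x] unfolding L_def by linarith
  have other: "1 - 1 / (2 * real K) \<le> measure (Mb k) (Y k)" if "k \<noteq> i" for k
  proof -
    interpret prob_space "Mb k" unfolding Mb_def by (rule prob_space_beta[OF apos(1) apos(2)])
    have "measure (Mb k) {1-t..} \<le> L * (1 - (1 - t))"
      unfolding Mb_def by (rule beta_prob_upper[OF apos(1) apos(2)]) (use t0 L1 pdfL in auto)
    moreover have "measure (Mb k) (space (Mb k) - {1-t..}) = 1 - measure (Mb k) {1-t..}"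
      by (rule prob_compl) (simp add: Mb_def)
    moreover have "space (Mb k) - {1-t..} = Y k" using that by (auto simp: Mb_def Y_def)
    ultimately show ?thesis using Lt by simp
  qed
  have h0: "0 \<le> 1 - 1 / (2 * real K)" using K1 by (simp add: field_simps)
  have "(1 - 1 / (2 * real K)) ^ (K - 1) \<le> (\<Prod>k\<in>{..<K} - {i}. measure (Mb k) (Y k))"
  proof -
    have "(\<Prod>k\<in>{..<K} - {i}. (1 - 1 / (2 * real K))) \<le> (\<Prod>k\<in>{..<K} - {i}. measure (Mb k) (Y k))"
      by (rule prod_mono) (use other h0 in auto)
    moreover have "card ({..<K} - {i}) = K - 1" using i by simp
    ultimately show ?thesis by simp
  qed
  moreover have "1/2 \<le> (1 - 1 / (2 * real K)) ^ (K - 1)"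
  proof -
    have "1 + real (K - 1) * (- 1 / (2 * real K)) \<le> (1 + (- 1 / (2 * real K))) ^ (K - 1)"
      by (rule Bernoulli_inequality) (use K1 in \<open>simp add: field_simps\<close>)
    moreover have "1/2 \<le> 1 + real (K - 1) * (- 1 / (2 * real K))"
      using K1 i by (simp add: field_simps of_nat_diff)
    ultimately show ?thesis by simp
  qed
  ultimately have rest: "1/2 \<le> (\<Prod>k\<in>{..<K} - {i}. measure (Mb k) (Y k))" by linarith
  define c where "c = (1/2::real) powr (Mx-1) * (t/2) powr (Mx-1)"
  have c0: "0 \<le> c" unfolding c_def by simp
  have first: "(t/2) * c \<le> measure (Mb i) (Y i)"
  proof -
    have "c * ((1 - t/2) - (1 - t)) \<le> measure (Mb i) {1-t..1-t/2}"
      unfolding Mb_def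
    proof (rule beta_prob_lower[OF apos(1) apos(2)])
      fix x assume x: "x \<in> {1-t..1-t/2}"
      have 1: "(1/2) powr (Mx-1) \<le> x powr (Mx-1)" using x t2 Mx1 by (intro powr_mono2) auto
      have 2: "(t/2) powr (Mx-1) \<le> (1-x) powr (Mx-1)" using x t0 Mx1 by (intro powr_mono2) auto
      have "c \<le> x powr (Mx - 1) * (1 - x) powr (Mx - 1)"
        unfolding c_def by (rule mult_mono[OF 1 2]) auto
      also have "\<dots> \<le> beta_pdf (ext1 K \<alpha> i) (ext1 K \<beta> i) x"
        using x t0 t2 by (intro pdf_lower[OF ab]) auto
      finally show "c \<le> beta_pdf (ext1 K \<alpha> i) (ext1 K \<beta> i) x" .
    qed (use t0 c0 in auto)
    moreover have "measure (Mb i) {1-t..1-t/2} \<le> measure (Mb i) (Y i)"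
    proof -
      interpret prob_space "Mb i" unfolding Mb_def by (rule prob_space_beta[OF apos(1) apos(2)])
      show ?thesis by (rule finite_measure_mono) (auto simp: Y_def Mb_def)
    qed
    ultimately show ?thesis by (simp add: mult.commute)
  qed
  have "(t/2) * c * (1/2) \<le> measure P F"
    unfolding mF by (rule mult_mono[OF first rest]) (use t0 c0 in auto)
  moreover have "(t/2) * c * (1/2) = (t/4) powr Mx"
  proof -
    have "(t/2) * c * (1/2) = ((1/2) * (1/2) powr (Mx-1)) * ((t/2) * (t/2) powr (Mx-1))"
      unfolding c_def by (simp add: algebra_simps)
    also have "\<dots> = (1/2) powr Mx * (t/2) powr Mx"
    proof -
      have e1: "(1/2::real) * (1/2) powr (Mx-1) = (1/2) powr Mx" using powr_mult_base[of "1/2" "Mx-1"] by simp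
      have e2: "(t/2) * (t/2) powr (Mx-1) = (t/2) powr Mx" using powr_mult_base[of "t/2" "Mx-1"] t0 by simp
      show ?thesis by (simp only: e1 e2)
    qed
    also have "\<dots> = (t/4) powr Mx" by (simp add: powr_mult[symmetric])
    finally show ?thesis .
  qed
  moreover have "t/4 = 1 / (8 * L * real K)" unfolding t_def by simp
  ultimately have low: "(1 / (8 * L * real K)) powr Mx \<le> measure P F" by simp
  show ?thesis
  proof (cases "G \<in> sets P")
    case False
    then show ?thesis using measure_notin_sets unfolding G_def P_def by blast
  next
    case True
    interpret prob_space P by (rule probP)
    have "measure P F \<le> measure P G" by (rule finite_measure_mono[OF FG True])
    then show ?thesis using low unfolding G_def P_def L_def by simp
  qed
qed


lemma finite_pairs: "finite {f i j | i j. i < (K::nat) \<and> j < K \<and> i \<noteq> j}"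
proof -
  have "{f i j | i j. i < K \<and> j < K \<and> i \<noteq> j} \<subseteq> (\<lambda>(i,j). f i j) ` ({..<K} \<times> {..<K})"
    by auto
  then show ?thesis by (rule finite_subset) auto
qed

theorem corollary3p4:
  fixes C_TS M :: real
  assumes "C_TS > 0" and "M \<ge> 1"
  shows "\<exists>c. \<forall>(K::nat) (\<alpha>::nat \<Rightarrow> real) (\<beta>::nat \<Rightarrow> real).
           K \<ge> 2 \<longrightarrow>
           (\<forall>i<K. 1 \<le> \<alpha> i \<and> \<alpha> i \<le> M \<and> 1 \<le> \<beta> i \<and> \<beta> i \<le> M) \<longrightarrow>
           N_TS C_TS K (instance_measure K \<alpha> \<beta>) \<le> c * ln (real K)"
proof -
  define q where "q = (1/8::real) powr (M-1) * (1/8) powr (M-1)"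
  define e0 where "e0 = (1/4) * ((q/4) * (q/4))"
  define L where "L = max 1 (1 / Beta M M)"
  define c where "c = C_TS * e0 powr (-2) * (M * (ln (8*L) / ln 2 + 1))"
  have q0: "0 < q" unfolding q_def by simp
  have e00: "0 < e0" unfolding e0_def using q0 by simp
  have L1: "1 \<le> L" unfolding L_def by simp
  have lnL: "0 \<le> ln (8*L)" using L1 by simp
  have c0: "0 \<le> c" unfolding c_def using assms lnL by simp
  show ?thesis
  proof (intro exI[of _ c] allI impI)
    fix K :: nat and \<alpha> \<beta> :: "nat \<Rightarrow> real"
    assume K2: "K \<ge> 2" and A: "\<forall>i<K. 1 \<le> \<alpha> i \<and> \<alpha> i \<le> M \<and> 1 \<le> \<beta> i \<and> \<beta> i \<le> M"
    define P where "P = instance_measure K \<alpha> \<beta>"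
    have lnK2: "ln 2 \<le> ln (real K)" using K2 by simp
    have lnK0: "0 \<le> ln (real K)" using K2 by simp
    have cK0: "0 \<le> c * ln (real K)" using c0 lnK0 by simp
    have "eps_TS K P \<in> {(\<integral>\<mu>. pos_part (\<mu> i - \<mu> j) \<partial>P) | i j. i < K \<and> j < K \<and> i \<noteq> j}"
      unfolding eps_TS_def
    proof (rule Min_in[OF finite_pairs])
      show "{(\<integral>\<mu>. pos_part (\<mu> i - \<mu> j) \<partial>P) | i j. i < K \<and> j < K \<and> i \<noteq> j} \<noteq> {}"
      proof -
        have "(\<integral>\<mu>. pos_part (\<mu> 0 - \<mu> 1) \<partial>P) \<in> {(\<integral>\<mu>. pos_part (\<mu> i - \<mu> j) \<partial>P) | i j. i < K \<and> j < K \<and> i \<noteq> j}"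
          using K2 by (intro CollectI exI[of _ 0] exI[of _ "1::nat"]) auto
        then show ?thesis by blast
      qed
    qed
    then obtain i j where ij: "i < K" "j < K" "i \<noteq> j"
      and epsd: "eps_TS K P = (\<integral>\<mu>. pos_part (\<mu> i - \<mu> j) \<partial>P)" by blast
    have eps_cases: "eps_TS K P = 0 \<or> e0 \<le> eps_TS K P"
      using eps_term[OF A ij] unfolding epsd unfolding P_def e0_def q_def by simp
    have "delta_TS K P \<in> (\<lambda>i. measure P {\<mu> \<in> space P. best_arm K \<mu> = i}) ` {..<K}"
      unfolding delta_TS_def
    proof -
      have eq: "{measure P {\<mu> \<in> space P. best_arm K \<mu> = i} | i. i < K}
          = (\<lambda>i. measure P {\<mu> \<in> space P. best_arm K \<mu> = i}) ` {..<K}" by auto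
      show "Min {measure P {\<mu> \<in> space P. best_arm K \<mu> = i} | i. i < K}
          \<in> (\<lambda>i. measure P {\<mu> \<in> space P. best_arm K \<mu> = i}) ` {..<K}"
        unfolding eq by (rule Min_in) (use K2 lessThan_empty_iff in auto)
    qed
    then obtain i' where i': "i' < K"
      and deltad: "delta_TS K P = measure P {\<mu> \<in> space P. best_arm K \<mu> = i'}" by auto
    define d where "d = (1 / (8 * L * real K)) powr M"
    have delta_cases: "delta_TS K P = 0 \<or> d \<le> delta_TS K P"
      using delta_term[OF A i'] unfolding deltad unfolding P_def d_def L_def by simp
    have N_eq: "N_TS C_TS K P = C_TS * (eps_TS K P) powr (-2) * ln (1 / delta_TS K P)"
      by (simp add: N_TS_def)
    have main: "N_TS C_TS K P \<le> c * ln (real K)"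
    proof (cases "eps_TS K P = 0 \<or> delta_TS K P = 0")
      case True
      then have "N_TS C_TS K P = 0" unfolding N_eq by auto
      then show ?thesis using cK0 by simp
    next
      case False
      then have eps: "e0 \<le> eps_TS K P" and del: "d \<le> delta_TS K P"
        using eps_cases delta_cases by auto
      have d0: "0 < d" unfolding d_def using L1 K2 by simp
      have epos: "0 < eps_TS K P" using eps e00 by simp
      have dpos: "0 < delta_TS K P" using del d0 by simp
      have X0: "0 \<le> C_TS * (eps_TS K P) powr (-2)" using assms by simp
      show ?thesis
      proof (cases "ln (1 / delta_TS K P) \<le> 0")
        case True
        then have "N_TS C_TS K P \<le> 0" unfolding N_eq using X0 by (simp add: mult_nonneg_nonpos)
        then show ?thesis using cK0 by simp
      next
        case False
        have pw: "(eps_TS K P) powr (-2) \<le> e0 powr (-2)"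
          by (rule powr_mono2'[OF _ e00 eps]) simp
        have "ln (1 / delta_TS K P) \<le> ln (1 / d)"
          using del d0 dpos by (simp add: frac_le)
        also have "ln (1 / d) = M * ln (8 * L * real K)"
          unfolding d_def using L1 K2 by (simp add: ln_powr ln_div)
        also have "\<dots> = M * (ln (8 * L) + ln (real K))"
          using L1 K2 by (simp add: ln_mult)
        also have "\<dots> \<le> M * ((ln (8*L) / ln 2 + 1) * ln (real K))"
        proof -
          have "ln (8 * L) = (ln (8*L) / ln 2) * ln 2" by simp
          also have "\<dots> \<le> (ln (8*L) / ln 2) * ln (real K)"
            by (rule mult_left_mono[OF lnK2]) (use lnL in simp)
          finally have h: "ln (8 * L) \<le> (ln (8*L) / ln 2) * ln (real K)" .
          have "ln (8 * L) + ln (real K) \<le> (ln (8*L) / ln 2 + 1) * ln (real K)"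
            using h by (simp add: distrib_right)
          then show ?thesis using assms by (intro mult_left_mono) auto
        qed
        finally have lnb: "ln (1 / delta_TS K P) \<le> M * ((ln (8*L) / ln 2 + 1) * ln (real K))" .
        have "N_TS C_TS K P \<le> C_TS * e0 powr (-2) * (M * ((ln (8*L) / ln 2 + 1) * ln (real K)))"
          unfolding N_eq
        proof (rule mult_mono)
          show "C_TS * eps_TS K P powr - 2 \<le> C_TS * e0 powr - 2"
            using pw assms by simp
        qed (use lnb False assms in auto)
        also have "\<dots> = c * ln (real K)" unfolding c_def by (simp add: algebra_simps)
        finally show ?thesis .
      qed
    qed
    then show "N_TS C_TS K (instance_measure K \<alpha> \<beta>) \<le> c * ln (real K)"
      unfolding P_def .
  qed
qed

end
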